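(* Let $\mathcal{S}$ be an addable abstract numeration system and let $Y\subseteq\mathbb{N}^{\mathbb{N}}$ be a subshift (over a finite subset of $\mathbb{N}$) that is $\mathcal{S}$-codable. Then its hereditary closure $\tilde Y=\{\mathbf{x}\in\mathbb{N}^{\mathbb{N}}:\exists\mathbf{y}\in Y\ \forall i\ x_i\le y_i\}$ is $\mathcal{S}$-codable.
   Context: ANS: $\mathcal{S}=(L,\prec)$ with $L$ an infinite language and $\prec$ a total order of type $\omega$; $\mathrm{rep}(n)$ is the $n$-th word of $L$; tuples are represented by left-padding with a new symbol $\#$; $Z\subseteq\mathbb{N}^d$ is $\mathcal{S}$-recognizable if $\mathrm{rep}(Z)$ is regular; $\mathcal{S}$ is addable if $\{(x,y,x+y)\}$ is $\mathcal{S}$-recognizable. For $\mathbf{y}\in\mathbb{N}^{\mathbb{N}}$: $\sum\mathbf{y}=\sum_iy_i$; if finite, $\nu(\mathbf{y})$ is the unique nondecreasing $(n_1,\dots,n_d)$ with $y_j=|\{k:n_k=j\}|$. Coding dimension of $Z\subseteq\mathbb{N}^{\mathbb{N}}$: least $d$ bounding $\sum\mathbf{y}$ on $Z$, if it exists. $Z$ is weakly $\mathcal{S}$-codable if for every $k$, $\{\nu(\mathbf{y}):\mathbf{y}\in Z,\sum\mathbf{y}\le k\}$ is $\mathcal{S}$-recognizable in each dimension; $\mathcal{S}$-codable if moreover the coding dimension is finite. *)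

theory Defs
  imports Main
begin

definition regular :: "'b list set \<Rightarrow> bool" where
  "regular A \<longleftrightarrow> (\<exists>(n::nat) (\<delta>::nat \<Rightarrow> 'b \<Rightarrow> nat) q0 F.
      q0 < n \<and> (\<forall>q<n. \<forall>a. \<delta> q a < n) \<and> A = {w. foldl \<delta> q0 w \<in> F})"

text \<open>An ANS (L, lt) over a finite alphabet Alph: L an infinite language over Alph,
  lt a strict total order on L of order type omega (every word has finitely many
  predecessors).\<close>
definition ans :: "'a set \<Rightarrow> 'a list set \<Rightarrow> ('a list \<Rightarrow> 'a list \<Rightarrow> bool) \<Rightarrow> bool" where
  "ans Alph L lt \<longleftrightarrow> finite Alph \<and> L \<subseteq> lists Alph \<and> infinite L
     \<and> (\<forall>w\<in>L. \<not> lt w w)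
     \<and> (\<forall>u\<in>L. \<forall>v\<in>L. \<forall>w\<in>L. lt u v \<longrightarrow> lt v w \<longrightarrow> lt u w)
     \<and> (\<forall>u\<in>L. \<forall>v\<in>L. u \<noteq> v \<longrightarrow> lt u v \<or> lt v u)
     \<and> (\<forall>w\<in>L. finite {v\<in>L. lt v w})"

text \<open>rep n is the n-th word of L (counting from 0).\<close>
definition rep :: "'a list set \<Rightarrow> ('a list \<Rightarrow> 'a list \<Rightarrow> bool) \<Rightarrow> nat \<Rightarrow> 'a list" where
  "rep L lt n = (THE w. w \<in> L \<and> card {v\<in>L. lt v w} = n)"

text \<open>Left padding with the new symbol # (rendered as None) to length m.\<close>
definition pad :: "nat \<Rightarrow> 'a list \<Rightarrow> 'a option list" where
  "pad m w = replicate (m - length w) None @ map Some w"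

text \<open>Representation of a d-tuple (a list of length d): pad all components to the
  maximal length and read them in parallel; letters are d-tuples (lists of length d)
  over Alph \<union> {#}.\<close>
definition rep_tuple :: "'a list set \<Rightarrow> ('a list \<Rightarrow> 'a list \<Rightarrow> bool) \<Rightarrow> nat list
    \<Rightarrow> 'a option list list" where
  "rep_tuple L lt xs =
     (let ws = map (rep L lt) xs;
          m = foldr (\<lambda>w k. max (length w) k) ws 0;
          ps = map (pad m) ws
      in map (\<lambda>j. map (\<lambda>p. p ! j) ps) [0..<m])"

definition recognizable :: "'a list set \<Rightarrow> ('a list \<Rightarrow> 'a list \<Rightarrow> bool) \<Rightarrow> nat list set \<Rightarrow> bool" where
  "recognizable L lt Z \<longleftrightarrow> regular (rep_tuple L lt ` Z)"

definition addable :: "'a list set \<Rightarrow> ('a list \<Rightarrow> 'a list \<Rightarrow> bool) \<Rightarrow> bool" where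
  "addable L lt \<longleftrightarrow> recognizable L lt {[x, y, x + y] | x y. True}"

text \<open>sum_le y k: the sum of y (possibly infinite) is at most k.\<close>
definition sum_le :: "(nat \<Rightarrow> nat) \<Rightarrow> nat \<Rightarrow> bool" where
  "sum_le y k \<longleftrightarrow> finite {i. y i \<noteq> 0} \<and> (\<Sum>i\<in>{i. y i \<noteq> 0}. y i) \<le> k"

definition nu :: "(nat \<Rightarrow> nat) \<Rightarrow> nat list" where
  "nu y = concat (map (\<lambda>j. replicate (y j) j) [0..<Suc (Max (insert 0 {i. y i \<noteq> 0}))])"

definition weakly_codable :: "'a list set \<Rightarrow> ('a list \<Rightarrow> 'a list \<Rightarrow> bool) \<Rightarrow> (nat \<Rightarrow> nat) set \<Rightarrow> bool" where
  "weakly_codable L lt Z \<longleftrightarrow>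
     (\<forall>k d. recognizable L lt {nu y | y. y \<in> Z \<and> sum_le y k \<and> length (nu y) = d})"

definition codable :: "'a list set \<Rightarrow> ('a list \<Rightarrow> 'a list \<Rightarrow> bool) \<Rightarrow> (nat \<Rightarrow> nat) set \<Rightarrow> bool" where
  "codable L lt Z \<longleftrightarrow> weakly_codable L lt Z \<and> (\<exists>d. \<forall>y\<in>Z. sum_le y d)"

text \<open>One-sided subshift over a finite alphabet A \<subseteq> N: closed in the product topology
  and invariant under the shift.\<close>
definition subshift :: "(nat \<Rightarrow> nat) set \<Rightarrow> bool" where
  "subshift Y \<longleftrightarrow> (\<exists>A. finite A \<and> (\<forall>x\<in>Y. \<forall>i. x i \<in> A))
     \<and> (\<forall>x\<in>Y. (\<lambda>i. x (Suc i)) \<in> Y)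
     \<and> (\<forall>x. (\<forall>n. \<exists>y\<in>Y. \<forall>i<n. y i = x i) \<longrightarrow> x \<in> Y)"

definition hered_closure :: "(nat \<Rightarrow> nat) set \<Rightarrow> (nat \<Rightarrow> nat) set" where
  "hered_closure Y = {x. \<exists>y\<in>Y. \<forall>i. x i \<le> y i}"

end

theory Submission
  imports Defs "HOL-Library.Multiset" "HOL-Library.Sublist"
begin


definition quot :: "'b list \<Rightarrow> 'b list set \<Rightarrow> 'b list set" where
  "quot u A = {w. u @ w \<in> A}"

lemma quot_Nil[simp]: "quot [] A = A" by (simp add: quot_def)
lemma quot_quot[simp]: "quot v (quot u A) = quot (u @ v) A" by (simp add: quot_def)

lemma regular_quots:
  assumes "regular A" shows "finite (range (\<lambda>u. quot u A))"
proof -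
  obtain n \<delta> q0 F where h: "q0 < (n::nat)" "\<forall>q<n. \<forall>a. \<delta> q a < n" "A = {w. foldl \<delta> q0 w \<in> F}"
    using assms unfolding regular_def by blast
  have lt: "foldl \<delta> q w < n" if "q < n" for q w using that
    by (induction w arbitrary: q) (auto simp: h(2))
  have "range (\<lambda>u. quot u A) \<subseteq> (\<lambda>q. {w. foldl \<delta> q w \<in> F}) ` {..<n}"
  proof
    fix K assume "K \<in> range (\<lambda>u. quot u A)"
    then obtain u where "K = quot u A" by auto
    then have "K = {w. foldl \<delta> (foldl \<delta> q0 u) w \<in> F}" by (auto simp: quot_def h(3))
    then show "K \<in> (\<lambda>q. {w. foldl \<delta> q w \<in> F}) ` {..<n}" using lt[OF h(1), of u] by auto
  qed
  then show ?thesis by (rule finite_subset) auto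
qed

lemma quots_regular:
  assumes "finite (range (\<lambda>u. quot u A))" shows "regular A"
proof -
  define Q where "Q = range (\<lambda>u. quot u A)"
  obtain f where f: "bij_betw f Q {0..<card Q}" using ex_bij_betw_finite_nat assms Q_def by blast
  define g where "g = inv_into Q f"
  have AQ: "A \<in> Q" unfolding Q_def by (metis quot_Nil rangeI)
  have cp: "0 < card Q" using AQ assms Q_def card_gt_0_iff by blast
  define \<delta> where "\<delta> q a = (if q < card Q then f (quot [a] (g q)) else 0)" for q a
  have gf: "g (f K) = K" if "K \<in> Q" for K
    using f that unfolding g_def by (simp add: bij_betw_inv_into_left)
  have fQ: "f K < card Q" if "K \<in> Q" for K using f that bij_betw_apply by fastforce
  have qQ: "quot u A \<in> Q" for u unfolding Q_def by auto
  have run: "foldl \<delta> (f (quot u A)) w = f (quot (u @ w) A)" for u w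
  proof (induction w arbitrary: u)
    case Nil then show ?case by simp
  next
    case (Cons a w)
    have "\<delta> (f (quot u A)) a = f (quot (u @ [a]) A)"
      unfolding \<delta>_def using fQ[OF qQ] gf[OF qQ] by simp
    then show ?case using Cons[of "u @ [a]"] by simp
  qed
  have "A = {w. foldl \<delta> (f A) w \<in> {q. q < card Q \<and> [] \<in> g q}}"
  proof -
    have "foldl \<delta> (f A) w = f (quot w A)" for w using run[of "[]" w] by simp
    then have "w \<in> A \<longleftrightarrow> foldl \<delta> (f A) w \<in> {q. q < card Q \<and> [] \<in> g q}" for w
      using gf[OF qQ, of w] fQ[OF qQ, of w] by (simp add: quot_def)
    then show ?thesis by blast
  qed
  moreover have "\<forall>q<card Q. \<forall>a. \<delta> q a < card Q"
  proof (intro allI impI)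
    fix q a assume q: "q < card Q"
    have "g q \<in> Q" unfolding g_def using f q
      by (metis atLeastLessThan_iff bij_betw_def inv_into_into zero_le)
    then obtain u where "g q = quot u A" unfolding Q_def by auto
    then have "quot [a] (g q) = quot (u @ [a]) A" by simp
    then show "\<delta> q a < card Q" unfolding \<delta>_def using q fQ[OF qQ] by simp
  qed
  ultimately show ?thesis unfolding regular_def using fQ[OF AQ]
    by (intro exI[of _ "card Q"] exI[of _ \<delta>] exI[of _ "f A"] exI[of _ "{q. q < card Q \<and> [] \<in> g q}"] conjI) simp_all
qed

lemma regular_family:
  assumes "finite F" "\<And>u. quot u B \<in> F" shows "regular B"
  using assms by (intro quots_regular) (auto intro: finite_subset)

lemma regular_empty: "regular {}"
  by (rule regular_family[of "{{}}"]) (auto simp: quot_def)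

lemma regular_Un: assumes "regular A" "regular B" shows "regular (A \<union> B)"
proof (rule regular_family)
  show "finite ((\<lambda>(X,Y). X \<union> Y) ` (range (\<lambda>u. quot u A) \<times> range (\<lambda>u. quot u B)))"
    using regular_quots[OF assms(1)] regular_quots[OF assms(2)] by auto
  fix u show "quot u (A \<union> B) \<in> (\<lambda>(X,Y). X \<union> Y) ` (range (\<lambda>u. quot u A) \<times> range (\<lambda>u. quot u B))"
    by (rule image_eqI[of _ _ "(quot u A, quot u B)"]) (auto simp: quot_def)
qed

lemma regular_UN: "finite I \<Longrightarrow> (\<And>i. i \<in> I \<Longrightarrow> regular (A i)) \<Longrightarrow> regular (\<Union>i\<in>I. A i)"
  by (induction I rule: finite_induct) (auto intro: regular_Un regular_empty)

lemma regular_map: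
  assumes "regular A" shows "regular (map h ` A)"
proof (rule regular_family)
  let ?Q = "range (\<lambda>u. quot u A)"
  show "finite ((\<lambda>S. \<Union>K\<in>S. map h ` K) ` Pow ?Q)" using regular_quots[OF assms] by auto
  fix v
  have "quot v (map h ` A) = (\<Union>K\<in>{quot u A | u. map h u = v}. map h ` K)"
  proof (intro equalityI subsetI)
    fix w assume "w \<in> quot v (map h ` A)"
    then obtain x where x: "x \<in> A" "v @ w = map h x" by (auto simp: quot_def)
    then obtain u w0 where "x = u @ w0" "map h u = v" "map h w0 = w"
      by (metis map_eq_append_conv)
    then show "w \<in> (\<Union>K\<in>{quot u A | u. map h u = v}. map h ` K)" using x by (auto simp: quot_def)
  next
    fix w assume "w \<in> (\<Union>K\<in>{quot u A | u. map h u = v}. map h ` K)"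
    then obtain u w0 where u: "map h u = v" "u @ w0 \<in> A" "w = map h w0" by (auto simp: quot_def)
    then have "v @ w = map h (u @ w0)" by simp
    then show "w \<in> quot v (map h ` A)" using u(2) unfolding quot_def by blast
  qed
  moreover have "{quot u A | u. map h u = v} \<in> Pow ?Q" by auto
  ultimately show "quot v (map h ` A) \<in> (\<lambda>S. \<Union>K\<in>S. map h ` K) ` Pow ?Q" by (simp only: image_eqI)
qed

lemma regular_dropWhile:
  assumes "regular A" shows "regular (dropWhile P ` A)"
proof (rule regular_family)
  let ?Q = "range (\<lambda>u. quot u A)"
  let ?F = "{dropWhile P ` A, {}} \<union> Union ` Pow ?Q"
  show "finite ?F" using regular_quots[OF assms] by auto
  fix v
  show "quot v (dropWhile P ` A) \<in> ?F"
  proof (cases v)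
    case Nil then show ?thesis by simp
  next
    case (Cons c v')
    show ?thesis
    proof (cases "P c")
      case True
      have "quot v (dropWhile P ` A) = {}"
      proof (rule ccontr)
        assume "quot v (dropWhile P ` A) \<noteq> {}"
        then obtain w where "(c # v') @ w \<in> dropWhile P ` A" unfolding quot_def Cons by blast
        then obtain x where "x \<in> A" "(c # v') @ w = dropWhile P x" by (rule imageE)
        then have "dropWhile P x = c # v' @ w" by simp
        then show False using hd_dropWhile[of P x] True by simp
      qed
      then show ?thesis by simp
    next
      case False
      have "quot v (dropWhile P ` A) = \<Union> {quot (p @ v) A | p. \<forall>z\<in>set p. P z}"
      proof (intro equalityI subsetI)
        fix w assume "w \<in> quot v (dropWhile P ` A)"
        then obtain x where x: "x \<in> A" "dropWhile P x = c # v' @ w" by (auto simp: quot_def Cons)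
        then have "x = takeWhile P x @ c # v' @ w" by (simp add: dropWhile_eq_Cons_conv)
        moreover have "\<forall>z\<in>set (takeWhile P x). P z" by (blast dest: set_takeWhileD)
        ultimately have "w \<in> quot (takeWhile P x @ v) A" using x(1) Cons by (simp add: quot_def)
        then show "w \<in> \<Union> {quot (p @ v) A | p. \<forall>z\<in>set p. P z}"
          using \<open>\<forall>z\<in>set (takeWhile P x). P z\<close> by blast
      next
        fix w assume "w \<in> \<Union> {quot (p @ v) A | p. \<forall>z\<in>set p. P z}"
        then obtain p where p: "\<forall>z\<in>set p. P z" "p @ v @ w \<in> A" by (auto simp: quot_def)
        have "dropWhile P (p @ v @ w) = v @ w" using p(1) False Cons by simp
        then show "w \<in> quot v (dropWhile P ` A)" using p(2) unfolding quot_def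
          by (metis (mono_tags, lifting) image_eqI mem_Collect_eq)
      qed
      then show ?thesis by blast
    qed
  qed
qed



definition mx :: "'c list list \<Rightarrow> nat" where
  "mx ws = foldr (\<lambda>w k. max (length w) k) ws 0"

lemma mx_Nil[simp]: "mx [] = 0" by (simp add: mx_def)
lemma mx_Cons[simp]: "mx (w # ws) = max (length w) (mx ws)" by (simp add: mx_def)

lemma mx_ge: "w \<in> set ws \<Longrightarrow> length w \<le> mx ws"
  by (induction ws) auto

lemma mx_le: "\<forall>w\<in>set ws. length w \<le> k \<Longrightarrow> mx ws \<le> k"
  by (induction ws) auto

lemma mx_att: "ws \<noteq> [] \<Longrightarrow> \<exists>w\<in>set ws. length w = mx ws"
proof (induction ws)
  case Nil then show ?case by simp
next
  case (Cons w ws)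
  show ?case
  proof (cases "ws = []")
    case True then show ?thesis by simp
  next
    case False
    then obtain v where "v \<in> set ws" "length v = mx ws" using Cons by blast
    then show ?thesis by (cases "length w \<le> mx ws") (auto simp: max_def)
  qed
qed

lemma pad_nth: "length w \<le> m \<Longrightarrow> j < m \<Longrightarrow>
   pad m w ! j = (if j < m - length w then None else Some (w ! (j - (m - length w))))"
  by (simp add: pad_def nth_append)

definition cols :: "nat \<Rightarrow> 'c list list \<Rightarrow> 'c option list list" where
  "cols m ws = map (\<lambda>j. map (\<lambda>w. pad m w ! j) ws) [0..<m]"

definition allN :: "'c option list \<Rightarrow> bool" where
  "allN c \<longleftrightarrow> (\<forall>z\<in>set c. z = None)"

lemma rep_tuple_cols: "rep_tuple L lt xs = cols (mx (map (rep L lt) xs)) (map (rep L lt) xs)"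
  by (simp add: rep_tuple_def Let_def cols_def mx_def)

lemma cols_drop:
  assumes le: "\<forall>w\<in>set ws. length w \<le> m'" and mm: "m' \<le> m"
    and att: "m' > 0 \<longrightarrow> (\<exists>w\<in>set ws. length w = m')"
  shows "dropWhile allN (cols m ws) = cols m' ws"
proof -
  have up: "[0..<m] = [0..<m-m'] @ map (\<lambda>i. i + (m-m')) [0..<m']"
    using upt_add_eq_append[of 0 "m-m'" m'] mm map_add_upt[of "m-m'" m'] by (simp add: add.commute)
  have pre: "allN (map (\<lambda>w. pad m w ! j) ws)" if "j < m - m'" for j
  proof -
    have "pad m w ! j = None" if "w \<in> set ws" for w
      using le that \<open>j < m - m'\<close> mm by (subst pad_nth) auto
    then show ?thesis by (auto simp: allN_def)
  qed
  have post: "map (\<lambda>w. pad m w ! (i + (m - m'))) ws = map (\<lambda>w. pad m' w ! i) ws" if "i < m'" for i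
  proof (rule map_cong[OF refl])
    fix w assume w: "w \<in> set ws"
    then have lw: "length w \<le> m'" using le by auto
    show "pad m w ! (i + (m - m')) = pad m' w ! i"
      using pad_nth[OF lw that] pad_nth[of w m "i + (m - m')"] lw mm that by auto
  qed
  have eq: "cols m ws = map (\<lambda>j. map (\<lambda>w. pad m w ! j) ws) [0..<m-m'] @ cols m' ws"
    unfolding cols_def by (subst up) (simp add: post)
  have "dropWhile allN (cols m ws) = dropWhile allN (cols m' ws)"
    unfolding eq by (rule dropWhile_append2) (auto intro: pre)
  also have "\<dots> = cols m' ws"
  proof (cases "m' = 0")
    case True then show ?thesis by (simp add: cols_def)
  next
    case False
    then obtain w where w: "w \<in> set ws" "length w = m'" using att by auto
    have "pad m' w ! 0 = Some (w ! 0)" using pad_nth[of w m' 0] w False by simp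
    then have "\<not> allN (hd (cols m' ws))" using False w
      by (auto simp: cols_def allN_def hd_map upt_conv_Cons)
    then show ?thesis by (simp add: dropWhile_eq_self_iff)
  qed
  finally show ?thesis .
qed

lemma rep_tuple_nths:
  "rep_tuple L lt (nths xs S) = dropWhile allN (map (\<lambda>c. nths c S) (rep_tuple L lt xs))"
proof -
  define ws where "ws = map (rep L lt) xs"
  define ws' where "ws' = nths ws S"
  have ws': "map (rep L lt) (nths xs S) = ws'" by (simp add: ws_def ws'_def nths_map)
  have "map (\<lambda>c. nths c S) (rep_tuple L lt xs) = cols (mx ws) ws'"
    unfolding rep_tuple_cols ws_def[symmetric] cols_def ws'_def by (simp add: nths_map)
  moreover have "dropWhile allN (cols (mx ws) ws') = cols (mx ws') ws'"
  proof (rule cols_drop)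
    show "\<forall>w\<in>set ws'. length w \<le> mx ws'" using mx_ge by blast
    show "mx ws' \<le> mx ws" using set_nths_subset[of ws S] mx_ge unfolding ws'_def
      by (intro mx_le) blast
    show "0 < mx ws' \<longrightarrow> (\<exists>w\<in>set ws'. length w = mx ws')"
    proof
      assume "0 < mx ws'"
      then have "ws' \<noteq> []" by auto
      then show "\<exists>w\<in>set ws'. length w = mx ws'" by (rule mx_att)
    qed
  qed
  ultimately show ?thesis by (simp add: rep_tuple_cols ws')
qed

lemma recognizable_nths:
  assumes "recognizable L lt Z"
  shows "recognizable L lt ((\<lambda>l. nths l S) ` Z)"
proof -
  have "rep_tuple L lt ` ((\<lambda>l. nths l S) ` Z)
      = dropWhile allN ` (map (\<lambda>c. nths c S) ` (rep_tuple L lt ` Z))"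
    by (simp add: image_image rep_tuple_nths)
  then show ?thesis using assms unfolding recognizable_def
    by (simp add: regular_dropWhile regular_map)
qed

lemma recognizable_UN:
  "finite I \<Longrightarrow> (\<And>i. i \<in> I \<Longrightarrow> recognizable L lt (Z i)) \<Longrightarrow> recognizable L lt (\<Union>i\<in>I. Z i)"
  unfolding recognizable_def image_UN by (rule regular_UN)



definition nuN :: "nat \<Rightarrow> (nat \<Rightarrow> nat) \<Rightarrow> nat list" where
  "nuN N y = concat (map (\<lambda>j. replicate (y j) j) [0..<N])"

lemma nuN_Suc: "nuN (Suc N) y = nuN N y @ replicate (y N) N"
  by (simp add: nuN_def)

lemma nuN_ext: "N \<le> N' \<Longrightarrow> \<forall>i\<ge>N. y i = 0 \<Longrightarrow> nuN N' y = nuN N y"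
proof (induction N' rule: dec_induct)
  case base then show ?case by simp
next
  case (step n) then show ?case by (simp add: nuN_Suc)
qed

lemma exN: "finite {i. (y::nat\<Rightarrow>nat) i \<noteq> 0} \<Longrightarrow> \<exists>N::nat. \<forall>i\<ge>N. y i = 0"
proof -
  assume f: "finite {i. (y::nat\<Rightarrow>nat) i \<noteq> 0}"
  have "y i = 0" if "i \<ge> Suc (Max (insert 0 {i. y i \<noteq> 0}))" for i
  proof (rule ccontr)
    assume "y i \<noteq> 0"
    then have "i \<le> Max (insert 0 {i. y i \<noteq> 0})" using f by (intro Max_ge) auto
    then show False using that by simp
  qed
  then show ?thesis by blast
qed

lemma nu_nuN: assumes "finite {i. y i \<noteq> 0}" "\<forall>i\<ge>N. y i = 0" shows "nu y = nuN N y"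
proof -
  define M where "M = Suc (Max (insert 0 {i. y i \<noteq> 0}))"
  have M: "\<forall>i\<ge>M. y i = 0"
  proof (intro allI impI, rule ccontr)
    fix i assume "M \<le> i" "y i \<noteq> 0"
    then have "i \<le> Max (insert 0 {i. y i \<noteq> 0})" using assms(1) by (intro Max_ge) auto
    then show False using \<open>M \<le> i\<close> M_def by simp
  qed
  have "nu y = nuN M y" by (simp add: nu_def nuN_def M_def)
  also have "\<dots> = nuN (max M N) y" using M nuN_ext[of M "max M N" y] by simp
  also have "\<dots> = nuN N y" using assms(2) nuN_ext[of N "max M N" y] by simp
  finally show ?thesis .
qed

lemma count_nuN: "count (mset (nuN N y)) i = (if i < N then y i else 0)"
  by (induction N) (auto simp: nuN_Suc nuN_def)

lemma set_nuN: "set (nuN N y) \<subseteq> {..<N}"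
  by (auto simp: nuN_def)

lemma sorted_nuN: "sorted (nuN N y)"
proof (induction N)
  case 0 then show ?case by (simp add: nuN_def)
next
  case (Suc N)
  then show ?case using set_nuN[of N y]
    by (auto simp: nuN_Suc sorted_append intro: less_imp_le)
qed

lemma length_nuN: "length (nuN N y) = (\<Sum>i<N. y i)"
  by (induction N) (auto simp: nuN_Suc nuN_def)

lemma count_nu: assumes "finite {i. y i \<noteq> 0}" shows "count (mset (nu y)) i = y i"
proof -
  obtain N where N: "\<forall>i\<ge>N. y i = 0" using exN[OF assms] by blast
  show ?thesis using nu_nuN[OF assms N] count_nuN[of N y i] N by auto
qed

lemma sorted_nu: assumes "finite {i. y i \<noteq> 0}" shows "sorted (nu y)"
proof -
  obtain N where N: "\<forall>i\<ge>N. y i = 0" using exN[OF assms] by blast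
  show ?thesis using nu_nuN[OF assms N] sorted_nuN by metis
qed

lemma length_nu: assumes "finite {i. y i \<noteq> 0}" shows "length (nu y) = sum y {i. y i \<noteq> 0}"
proof -
  obtain N where N: "\<forall>i\<ge>N. y i = 0" using exN[OF assms] by blast
  have sub: "{i. y i \<noteq> 0} \<subseteq> {..<N}"
  proof
    fix i assume "i \<in> {i. y i \<noteq> 0}"
    then have "\<not> N \<le> i" using N by auto
    then show "i \<in> {..<N}" by simp
  qed
  have "length (nu y) = sum y {..<N}" using nu_nuN[OF assms N] length_nuN by simp
  also have "\<dots> = sum y {i. y i \<noteq> 0}" by (rule sum.mono_neutral_right) (use sub in auto)
  finally show ?thesis .
qed

lemma subseq_mset: "subseq xs ys \<Longrightarrow> mset xs \<subseteq># mset ys"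
  by (induction rule: list_emb.induct) (auto intro: subset_mset.order_trans)

lemma subseq_rep: "m \<le> n \<Longrightarrow> subseq (replicate m a) (replicate n a)"
proof -
  assume "m \<le> n"
  then have "replicate n a = replicate m a @ replicate (n - m) a"
    by (metis le_add_diff_inverse replicate_add)
  then show ?thesis by (metis subseq_append' list_emb_Nil append_Nil2)
qed

lemma subseq_nuN: "\<forall>i. x i \<le> y i \<Longrightarrow> subseq (nuN N x) (nuN N y)"
  by (induction N) (auto simp: nuN_Suc nuN_def intro: list_emb_append_mono subseq_rep)

lemma nths_inter: "nths xs (I \<inter> {..<length xs}) = nths xs I"
  unfolding nths_def by (rule arg_cong[where f="map fst"], rule filter_cong) (auto simp: set_zip)



theorem mainTheorem17:
  fixes Alph :: "'a set" and L :: "'a list set" and lt :: "'a list \<Rightarrow> 'a list \<Rightarrow> bool"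
    and Y :: "(nat \<Rightarrow> nat) set"
  assumes "ans Alph L lt" and "addable L lt"
    and "subshift Y" and "codable L lt Y"
  shows "codable L lt (hered_closure Y)"
proof -
  from assms(4) obtain D where D: "\<forall>y\<in>Y. sum_le y D" and wc: "weakly_codable L lt Y"
    unfolding codable_def by blast
  define NY where "NY d' = {nu y | y. y \<in> Y \<and> sum_le y D \<and> length (nu y) = d'}" for d'
  have recY: "recognizable L lt (NY d')" for d' using wc unfolding weakly_codable_def NY_def by blast
  have bound: "\<forall>x\<in>hered_closure Y. sum_le x D"
  proof
    fix x assume "x \<in> hered_closure Y"
    then obtain y where y: "y \<in> Y" "\<forall>i. x i \<le> y i" unfolding hered_closure_def by blast
    have fy: "finite {i. y i \<noteq> 0}" and sy: "sum y {i. y i \<noteq> 0} \<le> D"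
      using D y(1) unfolding sum_le_def by auto
    have sub: "{i. x i \<noteq> 0} \<subseteq> {i. y i \<noteq> 0}"
    proof
      fix i assume "i \<in> {i. x i \<noteq> 0}"
      then show "i \<in> {i. y i \<noteq> 0}" using y(2)[rule_format, of i] by auto
    qed
    have fx: "finite {i. x i \<noteq> 0}" using finite_subset[OF sub fy] .
    have "sum x {i. x i \<noteq> 0} \<le> sum y {i. x i \<noteq> 0}" by (rule sum_mono) (use y(2) in auto)
    also have "\<dots> \<le> sum y {i. y i \<noteq> 0}" by (rule sum_mono2[OF fy sub]) auto
    finally show "sum_le x D" using sy fx unfolding sum_le_def by simp
  qed
  have main: "{nu x | x. x \<in> hered_closure Y \<and> sum_le x k \<and> length (nu x) = d}
     = (\<Union>d'\<in>{..D}. \<Union>S\<in>{S. S \<subseteq> {..<d'} \<and> card S = d \<and> d \<le> k}. (\<lambda>l. nths l S) ` NY d')"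
    for k d
  proof (intro equalityI subsetI)
    fix l assume "l \<in> {nu x | x. x \<in> hered_closure Y \<and> sum_le x k \<and> length (nu x) = d}"
    then obtain x where x: "x \<in> hered_closure Y" "sum_le x k" "length (nu x) = d" "l = nu x"
      by blast
    then obtain y where y: "y \<in> Y" "\<forall>i. x i \<le> y i" unfolding hered_closure_def by blast
    have fy: "finite {i. y i \<noteq> 0}" using D y(1) unfolding sum_le_def by auto
    have fx: "finite {i. x i \<noteq> 0}" using x(2) unfolding sum_le_def by auto
    have dk: "d \<le> k" using x(2,3) length_nu[OF fx] unfolding sum_le_def by simp
    define d' where "d' = length (nu y)"
    have d'D: "d' \<le> D" using D y(1) length_nu[OF fy] unfolding sum_le_def d'_def by simp
    obtain N where N: "\<forall>i\<ge>N. y i = 0" using exN[OF fy] by blast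
    have Nx: "\<forall>i\<ge>N. x i = 0" using N y(2) by (metis le_zero_eq)
    have "subseq (nu x) (nu y)"
      using nu_nuN[OF fx Nx] nu_nuN[OF fy N] subseq_nuN[OF y(2)] by simp
    then obtain I where I: "nu x = nths (nu y) I" using subseq_conv_nths by blast
    define S where "S = I \<inter> {..<d'}"
    have Sd: "S \<subseteq> {..<d'}" unfolding S_def by auto
    have lS: "l = nths (nu y) S" using I x(4) nths_inter[of "nu y" I] unfolding S_def d'_def by simp
    have "{i. i < length (nu y) \<and> i \<in> S} = S" using Sd unfolding d'_def by auto
    then have cS: "card S = d" using lS x(3,4) length_nths[of "nu y" S] by simp
    have "nu y \<in> NY d'" unfolding NY_def d'_def using y(1) D by blast
    then show "l \<in> (\<Union>d'\<in>{..D}. \<Union>S\<in>{S. S \<subseteq> {..<d'} \<and> card S = d \<and> d \<le> k}. (\<lambda>l. nths l S) ` NY d')"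
      using d'D cS dk lS Sd by blast
  next
    fix l assume "l \<in> (\<Union>d'\<in>{..D}. \<Union>S\<in>{S. S \<subseteq> {..<d'} \<and> card S = d \<and> d \<le> k}. (\<lambda>l. nths l S) ` NY d')"
    then obtain d' S l0 where h: "d' \<le> D" "S \<subseteq> {..<d'}" "card S = d" "d \<le> k" "l0 \<in> NY d'"
      "l = nths l0 S" by blast
    then obtain y where y: "y \<in> Y" "sum_le y D" "length (nu y) = d'" "l0 = nu y"
      unfolding NY_def by blast
    have fy: "finite {i. y i \<noteq> 0}" using y(2) unfolding sum_le_def by auto
    define x where "x i = count (mset l) i" for i
    have "subseq l (nu y)" using h(6) y(4) subseq_conv_nths by blast
    then have sub: "mset l \<subseteq># mset (nu y)" by (rule subseq_mset)
    have xy: "\<forall>i. x i \<le> y i"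
    proof
      fix i show "x i \<le> y i" unfolding x_def using mset_subset_eq_count[OF sub, of i] count_nu[OF fy, of i]
        by simp
    qed
    have "{i. x i \<noteq> 0} \<subseteq> set l" unfolding x_def by (auto simp: count_eq_zero_iff)
    then have fx: "finite {i. x i \<noteq> 0}" by (rule finite_subset) simp
    have sl: "sorted l" using sorted_nths[OF sorted_nu[OF fy]] h(6) y(4) by simp
    have "mset (nu x) = mset l" by (rule multiset_eqI) (simp add: count_nu[OF fx] x_def)
    then have nx: "nu x = l" using properties_for_sort[of "nu x" l] sorted_nu[OF fx] sorted_sort_id[OF sl]
      by simp
    have "{i. i < length l0 \<and> i \<in> S} = S" using h(2) y(3,4) by auto
    then have ll: "length l = d" using h(3,6) length_nths[of l0 S] by simp
    have "sum x {i. x i \<noteq> 0} = d" using length_nu[OF fx] nx ll by simp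
    then have "sum_le x k" using fx h(4) unfolding sum_le_def by simp
    moreover have "x \<in> hered_closure Y" unfolding hered_closure_def using y(1) xy by blast
    ultimately show "l \<in> {nu x | x. x \<in> hered_closure Y \<and> sum_le x k \<and> length (nu x) = d}"
      using nx ll by blast
  qed
  have "weakly_codable L lt (hered_closure Y)"
    unfolding weakly_codable_def
  proof (intro allI)
    fix k d
    show "recognizable L lt {nu x | x. x \<in> hered_closure Y \<and> sum_le x k \<and> length (nu x) = d}"
      unfolding main
    proof (rule recognizable_UN)
      show "finite {..D}" by simp
      fix d' assume "d' \<in> {..D}"
      show "recognizable L lt (\<Union>S\<in>{S. S \<subseteq> {..<d'} \<and> card S = d \<and> d \<le> k}. (\<lambda>l. nths l S) ` NY d')"
      proof (rule recognizable_UN)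
        show "finite {S. S \<subseteq> {..<d'} \<and> card S = d \<and> d \<le> k}"
          by (rule finite_subset[of _ "Pow {..<d'}"]) auto
        fix S show "recognizable L lt ((\<lambda>l. nths l S) ` NY d')" by (rule recognizable_nths[OF recY])
      qed
    qed
  qed
  then show ?thesis unfolding codable_def using bound by blast
qed

end
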